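(* Let $\mathcal{A}\in\mathbb{R}^{d_1\times\cdots\times d_k}$ be an order-$k$ real tensor and $\pi\in\mathcal{P}_{[k]}$. If $\mathcal{A}$ is $\pi$-OD, then for every partition $\tau$ in the upper cone $U_\pi=\{\tau\in\mathcal{P}_{[k]}:\ \pi\le\tau<\mathbf{1}_{[k]}\}$, \[ \|\mathrm{Unfold}_\tau(\mathcal{A})\|_\sigma=\|\mathrm{Unfold}_\pi(\mathcal{A})\|_\sigma . \]
   Context: $\mathcal{P}_{[k]}$ is the set of partitions of $[k]$, ordered by refinement ($\pi\le\tau$ if every block of $\pi$ lies in a block of $\tau$; $\tau<\mathbf{1}_{[k]}$ means $\tau\ne\{[k]\}$). $\mathcal{A}$ is $\pi$-orthogonal decomposable ($\pi$-OD) if $\mathcal{A}=\sum_{n=1}^r\lambda_n\mathbf{a}^{(n)}_1\otimes\cdots\otimes\mathbf{a}^{(n)}_k$ with $\lambda_1\ge\cdots\ge\lambda_r\ge0$, $\mathbf{a}^{(n)}_i\in\mathbb{R}^{d_i}$, and $\langle\otimes_{i\in B}\mathbf{a}^{(n)}_i,\otimes_{i\in B}\mathbf{a}^{(m)}_i\rangle=\delta_{nm}$ for all $B\in\pi$, $n,m\in[r]$. For a real tensor $\mathcal{T}\in\mathbb{R}^{e_1\times\cdots\times e_m}$, $\|\mathcal{T}\|_\sigma=\sup\{\sum t_{i_1\dots i_m}x^{(1)}_{i_1}\cdots x^{(m)}_{i_m}:\ \|\mathbf{x}_n\|_2=1\}$. Unfolding: for $\pi=\{B_1,\dots,B_\ell\}$,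 $\mathrm{Unfold}_\pi(\mathcal{A})$ is the order-$\ell$ tensor of dimensions $(\prod_{j\in B_1}d_j,\dots,\prod_{j\in B_\ell}d_j)$ whose entry at $(m_1,\dots,m_\ell)$ is $a_{i_1\dots i_k}$, where $m_j$ corresponds to $(i_r)_{r\in B_j}$ under a fixed bijection $\prod_{r\in B_j}[d_r]\to[\prod_{r\in B_j}d_r]$. *)

theory Defs
  imports "HOL-Analysis.Analysis" "HOL-Library.Disjoint_Sets"
begin

text \<open>Order-k real tensor with dimensions d 0, ..., d (k-1): a function A on index
tuples; only its values on index_set k d (i-th index below d i) are meaningful.\<close>

definition index_set :: "nat \<Rightarrow> (nat \<Rightarrow> nat) \<Rightarrow> (nat \<Rightarrow> nat) set" where
  "index_set k d = PiE {..<k} (\<lambda>i. {..<d i})"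

definition partitions :: "nat \<Rightarrow> nat set set set" where
  "partitions k = {P. partition_on {..<k} P}"

definition refines :: "nat set set \<Rightarrow> nat set set \<Rightarrow> bool" where
  "refines \<pi> \<tau> \<longleftrightarrow> (\<forall>B\<in>\<pi>. \<exists>C\<in>\<tau>. B \<subseteq> C)"

definition block_inner :: "(nat \<Rightarrow> nat) \<Rightarrow> nat set \<Rightarrow> (nat \<Rightarrow> nat \<Rightarrow> real) \<Rightarrow> (nat \<Rightarrow> nat \<Rightarrow> real) \<Rightarrow> real" where
  "block_inner d B x y =
     (\<Sum>j\<in>PiE B (\<lambda>i. {..<d i}). (\<Prod>i\<in>B. x i (j i)) * (\<Prod>i\<in>B. y i (j i)))"

definition pi_OD :: "nat \<Rightarrow> (nat \<Rightarrow> nat) \<Rightarrow> nat set set \<Rightarrow> ((nat \<Rightarrow> nat) \<Rightarrow> real) \<Rightarrow> bool" where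
  "pi_OD k d \<pi> A \<longleftrightarrow>
    (\<exists>(r::nat) (lam::nat \<Rightarrow> real) (a::nat \<Rightarrow> nat \<Rightarrow> nat \<Rightarrow> real).
        (\<forall>n m. 1 \<le> n \<longrightarrow> n \<le> m \<longrightarrow> m \<le> r \<longrightarrow> lam m \<le> lam n)
      \<and> (\<forall>n. 1 \<le> n \<longrightarrow> n \<le> r \<longrightarrow> 0 \<le> lam n)
      \<and> (\<forall>idx\<in>index_set k d. A idx = (\<Sum>n=1..r. lam n * (\<Prod>i<k. a n i (idx i))))
      \<and> (\<forall>B\<in>\<pi>. \<forall>n\<in>{1..r}. \<forall>m\<in>{1..r}.
            block_inner d B (a n) (a m) = (if n = m then 1 else 0)))"

definition spectral_norm :: "'m set \<Rightarrow> ('m \<Rightarrow> 'j set) \<Rightarrow> (('m \<Rightarrow> 'j) \<Rightarrow> real) \<Rightarrow> real" where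
  "spectral_norm M I T = Sup {(\<Sum>t\<in>PiE M I. T t * (\<Prod>m\<in>M. x m (t m))) | x.
        \<forall>m\<in>M. (\<Sum>j\<in>I m. (x m j)\<^sup>2) = 1}"

text \<open>Unfolding along a partition \<tau>: one mode per block B, whose index set is the set of
  multi-indices (i_r) for r in B (this plays the role of [prod_{r in B} d_r] under the
  fixed bijection).\<close>

definition block_of :: "nat set set \<Rightarrow> nat \<Rightarrow> nat set" where
  "block_of \<tau> i = (THE B. B \<in> \<tau> \<and> i \<in> B)"

definition unfold_idx :: "nat set set \<Rightarrow> (nat set \<Rightarrow> nat \<Rightarrow> nat) \<Rightarrow> nat \<Rightarrow> nat" where
  "unfold_idx \<tau> t = (\<lambda>i. if i \<in> \<Union>\<tau> then t (block_of \<tau> i) i else undefined)"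

definition unfold_norm :: "(nat \<Rightarrow> nat) \<Rightarrow> nat set set \<Rightarrow> ((nat \<Rightarrow> nat) \<Rightarrow> real) \<Rightarrow> real" where
  "unfold_norm d \<tau> A =
     spectral_norm \<tau> (\<lambda>B. PiE B (\<lambda>i. {..<d i})) (\<lambda>t. A (unfold_idx \<tau> t))"

end

theory Submission
  imports Defs
begin

lemma block_inner_prod:
  assumes "finite B"
  shows "block_inner d B x y = (\<Prod>i\<in>B. \<Sum>v\<in>{..<d i}. x i v * y i v)"
  unfolding block_inner_def
  by (subst prod_sum_PiE) (auto simp: assms prod.distrib)

lemma bessel:
  fixes u :: "'n \<Rightarrow> 's \<Rightarrow> real"
  assumes S: "finite S" and N: "finite N"
    and orth: "\<And>n m. n \<in> N \<Longrightarrow> m \<in> N \<Longrightarrow> (\<Sum>s\<in>S. u n s * u m s) = (if n = m then 1 else 0)"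
  shows "(\<Sum>n\<in>N. (\<Sum>s\<in>S. u n s * x s)\<^sup>2) \<le> (\<Sum>s\<in>S. (x s)\<^sup>2)"
proof -
  define c where "c n = (\<Sum>s\<in>S. u n s * x s)" for n
  have 0: "0 \<le> (\<Sum>s\<in>S. (x s - (\<Sum>n\<in>N. c n * u n s))\<^sup>2)"
    by (intro sum_nonneg) auto
  have e1: "(\<Sum>s\<in>S. x s * (\<Sum>n\<in>N. c n * u n s)) = (\<Sum>n\<in>N. (c n)\<^sup>2)"
  proof -
    have "(\<Sum>s\<in>S. x s * (\<Sum>n\<in>N. c n * u n s)) = (\<Sum>n\<in>N. c n * (\<Sum>s\<in>S. u n s * x s))"
      by (simp add: sum_distrib_left sum_distrib_right sum.swap[of _ S] mult_ac)
    thus ?thesis by (simp add: c_def power2_eq_square)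
  qed
  have e2: "(\<Sum>s\<in>S. (\<Sum>n\<in>N. c n * u n s)\<^sup>2) = (\<Sum>n\<in>N. (c n)\<^sup>2)"
  proof -
    have "(\<Sum>s\<in>S. (\<Sum>n\<in>N. c n * u n s)\<^sup>2) = (\<Sum>s\<in>S. \<Sum>n\<in>N. \<Sum>m\<in>N. c n * c m * (u n s * u m s))"
      by (simp add: power2_eq_square sum_product mult_ac)
    also have "\<dots> = (\<Sum>n\<in>N. \<Sum>m\<in>N. c n * c m * (\<Sum>s\<in>S. u n s * u m s))"
      by (simp add: sum_distrib_left sum.swap[of _ S])
    also have "\<dots> = (\<Sum>n\<in>N. \<Sum>m\<in>N. c n * c m * (if n = m then 1 else 0))"
      by (intro sum.cong refl) (simp add: orth)
    also have "\<dots> = (\<Sum>n\<in>N. (c n)\<^sup>2)"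
      using N by (simp add: power2_eq_square if_distrib cong: if_cong)
    finally show ?thesis .
  qed
  have "(\<Sum>s\<in>S. (x s - (\<Sum>n\<in>N. c n * u n s))\<^sup>2) =
      (\<Sum>s\<in>S. (x s)\<^sup>2) - 2 * (\<Sum>s\<in>S. x s * (\<Sum>n\<in>N. c n * u n s)) + (\<Sum>s\<in>S. (\<Sum>n\<in>N. c n * u n s)\<^sup>2)"
    by (simp add: power2_diff sum.distrib sum_subtractf sum_distrib_left mult_ac)
  with 0 e1 e2 show ?thesis by (simp add: c_def)
qed

lemma part_facts:
  assumes "partition_on {..<k} \<rho>"
  shows "finite \<rho>" "\<And>C. C \<in> \<rho> \<Longrightarrow> finite C \<and> C \<subseteq> {..<k} \<and> C \<noteq> {}"
    "\<And>C i. C \<in> \<rho> \<Longrightarrow> i \<in> C \<Longrightarrow> block_of \<rho> i = C"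
    "\<And>i. i < k \<Longrightarrow> \<exists>C\<in>\<rho>. i \<in> C"
    "\<Union>\<rho> = {..<k}"
proof -
  have U: "\<Union>\<rho> = {..<k}" using partition_onD1[OF assms] by simp
  show "\<Union>\<rho> = {..<k}" by (rule U)
  show "finite \<rho>" using U by (metis finite_UnionD finite_lessThan)
  show "\<And>C. C \<in> \<rho> \<Longrightarrow> finite C \<and> C \<subseteq> {..<k} \<and> C \<noteq> {}"
    using U partition_onD3[OF assms] by (metis Union_upper finite_lessThan finite_subset)
  show "\<And>i. i < k \<Longrightarrow> \<exists>C\<in>\<rho>. i \<in> C" using U by auto
  fix C i assume C: "C \<in> \<rho>" "i \<in> C"
  show "block_of \<rho> i = C" unfolding block_of_def
  proof (rule the_equality)
    show "C \<in> \<rho> \<and> i \<in> C" using C by simp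
    fix B assume "B \<in> \<rho> \<and> i \<in> B"
    thus "B = C" using disjointD[OF partition_onD2[OF assms]] C by blast
  qed
qed

lemma unfold_facts:
  assumes P: "partition_on {..<k} \<rho>" and t: "t \<in> PiE \<rho> (\<lambda>B. PiE B (\<lambda>i. {..<d i}))"
  shows "unfold_idx \<rho> t \<in> index_set k d"
    "(\<Prod>i<k. g i (unfold_idx \<rho> t i)) = (\<Prod>C\<in>\<rho>. \<Prod>i\<in>C. g i (t C i))"
proof -
  note F = part_facts[OF P]
  show "unfold_idx \<rho> t \<in> index_set k d"
    unfolding index_set_def unfold_idx_def
  proof (rule PiE_I)
    fix i assume "i \<in> {..<k}"
    then obtain C where C: "C \<in> \<rho>" "i \<in> C" using F(4) by auto
    have "t C \<in> PiE C (\<lambda>i. {..<d i})" using t C by auto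
    thus "(if i \<in> \<Union> \<rho> then t (block_of \<rho> i) i else undefined) \<in> {..<d i}"
      using C F(3)[OF C] by auto
  next
    fix i assume "i \<notin> {..<k}"
    thus "(if i \<in> \<Union> \<rho> then t (block_of \<rho> i) i else undefined) = undefined"
      using F(5) by auto
  qed
  have "(\<Prod>i<k. g i (unfold_idx \<rho> t i)) = (\<Prod>i\<in>\<Union>\<rho>. g i (unfold_idx \<rho> t i))"
    using F(5) by simp
  also have "\<dots> = (\<Prod>C\<in>\<rho>. \<Prod>i\<in>C. g i (unfold_idx \<rho> t i))"
    by (rule prod.Union_disjoint[where g="\<lambda>i. g i (unfold_idx \<rho> t i)", simplified]) (use F(1,2) disjointD[OF partition_onD2[OF P]] in auto)
  also have "\<dots> = (\<Prod>C\<in>\<rho>. \<Prod>i\<in>C. g i (t C i))"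
    by (intro prod.cong refl) (auto simp: unfold_idx_def F(3))
  finally show "(\<Prod>i<k. g i (unfold_idx \<rho> t i)) = (\<Prod>C\<in>\<rho>. \<Prod>i\<in>C. g i (t C i))" .
qed

lemma prod_abs_bound:
  fixes f :: "'a \<Rightarrow> real"
  assumes "finite R" "C1 \<in> R" "C2 \<in> R" "C1 \<noteq> C2" "\<And>C. C \<in> R \<Longrightarrow> \<bar>f C\<bar> \<le> 1"
  shows "(\<Prod>C\<in>R. f C) \<le> ((f C1)\<^sup>2 + (f C2)\<^sup>2) / 2"
proof -
  have "(\<Prod>C\<in>R. f C) \<le> \<bar>\<Prod>C\<in>R. f C\<bar>" by simp
  also have "\<dots> = (\<Prod>C\<in>R. \<bar>f C\<bar>)" by (simp add: abs_prod)
  also have "\<dots> = \<bar>f C1\<bar> * (\<bar>f C2\<bar> * (\<Prod>C\<in>R - {C1} - {C2}. \<bar>f C\<bar>))"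
    using assms by (simp add: prod.remove[of R C1] prod.remove[of "R - {C1}" C2])
  also have "\<dots> \<le> \<bar>f C1\<bar> * (\<bar>f C2\<bar> * 1)"
    using assms by (intro mult_left_mono prod_le_1) auto
  also have "\<dots> \<le> ((f C1)\<^sup>2 + (f C2)\<^sup>2) / 2"
    using sum_squares_bound[of "\<bar>f C1\<bar>" "\<bar>f C2\<bar>"] by (simp add: power2_eq_square)
  finally show ?thesis .
qed

lemma main:
  fixes r :: nat and A :: "(nat \<Rightarrow> nat) \<Rightarrow> real"
  assumes P: "partition_on {..<k} \<rho>" and C12: "C1 \<in> \<rho>" "C2 \<in> \<rho>" "C1 \<noteq> C2"
    and dpos: "\<forall>i<k. 0 < d i"
    and mono: "\<forall>n m. 1 \<le> n \<longrightarrow> n \<le> m \<longrightarrow> m \<le> r \<longrightarrow> lam m \<le> (lam n::real)"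
    and nn: "\<forall>n. 1 \<le> n \<longrightarrow> n \<le> r \<longrightarrow> 0 \<le> lam n"
    and rep: "\<forall>idx\<in>index_set k d. A idx = (\<Sum>n=1..r. lam n * (\<Prod>i<k. a n i (idx i)))"
    and orth: "\<forall>C\<in>\<rho>. \<forall>n\<in>{1..r}. \<forall>m\<in>{1..r}. block_inner d C (a n) (a m) = (if n = m then 1 else 0)"
  shows "unfold_norm d \<rho> A = (if r = 0 then 0 else lam 1)"
proof -
  note F = part_facts[OF P]
  define I where "I C = PiE C (\<lambda>i. {..<d i})" for C :: "nat set"
  define u where "u n C s = (\<Prod>i\<in>C. a n i (s i))" for n C and s :: "nat \<Rightarrow> nat"
  define c where "c n C x = (\<Sum>s\<in>I C. u n C s * x C s)" for n C and x :: "nat set \<Rightarrow> (nat \<Rightarrow> nat) \<Rightarrow> real"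
  define L where "L = (if r = 0 then 0 else lam 1)"
  have finI: "finite (I C)" if "C \<in> \<rho>" for C using F(2)[OF that] by (auto simp: I_def intro!: finite_PiE)
  have ortho: "(\<Sum>s\<in>I C. u n C s * u m C s) = (if n = m then 1 else 0)"
    if "C\<in>\<rho>" "n\<in>{1..r}" "m\<in>{1..r}" for C n m
    using orth that by (simp add: block_inner_def I_def u_def)
  have val: "(\<Sum>t\<in>PiE \<rho> I. A (unfold_idx \<rho> t) * (\<Prod>C\<in>\<rho>. x C (t C))) = (\<Sum>n=1..r. lam n * (\<Prod>C\<in>\<rho>. c n C x))" for x
  proof -
    have "(\<Sum>t\<in>PiE \<rho> I. A (unfold_idx \<rho> t) * (\<Prod>C\<in>\<rho>. x C (t C))) =
        (\<Sum>t\<in>PiE \<rho> I. \<Sum>n=1..r. lam n * (\<Prod>C\<in>\<rho>. u n C (t C) * x C (t C)))"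
    proof (intro sum.cong refl)
      fix t assume t: "t \<in> PiE \<rho> I"
      have t': "t \<in> PiE \<rho> (\<lambda>B. PiE B (\<lambda>i. {..<d i}))" using t by (simp add: I_def[abs_def])
      show "A (unfold_idx \<rho> t) * (\<Prod>C\<in>\<rho>. x C (t C)) = (\<Sum>n=1..r. lam n * (\<Prod>C\<in>\<rho>. u n C (t C) * x C (t C)))"
        using rep unfold_facts(1)[OF P t'] unfold_facts(2)[OF P t', of "a _"]
        by (simp add: sum_distrib_left prod.distrib u_def mult_ac)
    qed
    also have "\<dots> = (\<Sum>n=1..r. lam n * (\<Sum>t\<in>PiE \<rho> I. \<Prod>C\<in>\<rho>. u n C (t C) * x C (t C)))"
      by (simp add: sum.swap[of _ "PiE \<rho> I"] sum_distrib_left)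
    also have "\<dots> = (\<Sum>n=1..r. lam n * (\<Prod>C\<in>\<rho>. c n C x))"
      unfolding c_def by (subst prod_sum_PiE) (auto simp: F(1) finI)
    finally show ?thesis .
  qed
  have sumsq: "(\<Sum>n=1..r. (c n C x)\<^sup>2) \<le> 1"
    if C: "C \<in> \<rho>" and x: "\<forall>m\<in>\<rho>. (\<Sum>j\<in>I m. (x m j)\<^sup>2) = 1" for C x
  proof -
    have "(\<Sum>n=1..r. (c n C x)\<^sup>2) \<le> (\<Sum>s\<in>I C. (x C s)\<^sup>2)"
      unfolding c_def by (rule bessel) (use finI[OF C] ortho[OF C] in auto)
    thus ?thesis using x C by simp
  qed
  have cb: "\<bar>c n C x\<bar> \<le> 1"
    if C: "C \<in> \<rho>" and n: "n \<in> {1..r}" and x: "\<forall>m\<in>\<rho>. (\<Sum>j\<in>I m. (x m j)\<^sup>2) = 1" for C x n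
  proof -
    have "(c n C x)\<^sup>2 \<le> (\<Sum>n=1..r. (c n C x)\<^sup>2)"
      by (rule member_le_sum) (use n in auto)
    also have "\<dots> \<le> 1" by (rule sumsq[OF C x])
    finally show ?thesis by (simp add: abs_square_le_1)
  qed
  have upper: "(\<Sum>n=1..r. lam n * (\<Prod>C\<in>\<rho>. c n C x)) \<le> L"
    if x: "\<forall>m\<in>\<rho>. (\<Sum>j\<in>I m. (x m j)\<^sup>2) = 1" for x
  proof (cases "r = 0")
    case True thus ?thesis by (simp add: L_def)
  next
    case False
    have "(\<Sum>n=1..r. lam n * (\<Prod>C\<in>\<rho>. c n C x)) \<le>
        (\<Sum>n=1..r. lam 1 * (((c n C1 x)\<^sup>2 + (c n C2 x)\<^sup>2) / 2))"
    proof (rule sum_mono)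
      fix n assume n: "n \<in> {1..r}"
      have "lam n * (\<Prod>C\<in>\<rho>. c n C x) \<le> lam n * (((c n C1 x)\<^sup>2 + (c n C2 x)\<^sup>2) / 2)"
        using nn n by (intro mult_left_mono prod_abs_bound[OF F(1) C12]) (auto intro: cb[OF _ n x])
      also have "\<dots> \<le> lam 1 * (((c n C1 x)\<^sup>2 + (c n C2 x)\<^sup>2) / 2)"
        using mono n by (intro mult_right_mono) auto
      finally show "lam n * (\<Prod>C\<in>\<rho>. c n C x) \<le> lam 1 * (((c n C1 x)\<^sup>2 + (c n C2 x)\<^sup>2) / 2)" .
    qed
    also have "\<dots> = lam 1 * (((\<Sum>n=1..r. (c n C1 x)\<^sup>2) + (\<Sum>n=1..r. (c n C2 x)\<^sup>2)) / 2)"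
      by (simp only: sum_distrib_left[symmetric] sum_divide_distrib[symmetric] sum.distrib)
    also have "\<dots> \<le> lam 1 * 1"
      using sumsq[OF C12(1) x] sumsq[OF C12(2) x] nn False by (intro mult_left_mono) auto
    finally show ?thesis using False by (simp add: L_def)
  qed
  have attain: "\<exists>x. (\<forall>m\<in>\<rho>. (\<Sum>j\<in>I m. (x m j)\<^sup>2) = 1) \<and> (\<Sum>n=1..r. lam n * (\<Prod>C\<in>\<rho>. c n C x)) = L"
  proof (cases "r = 0")
    case True
    define x where "x C s = (if s = restrict (\<lambda>_. 0) C then 1 else (0::real))" for C and s :: "nat \<Rightarrow> nat"
    have "(\<Sum>j\<in>I m. (x m j)\<^sup>2) = 1" if m: "m \<in> \<rho>" for m
    proof -
      have "restrict (\<lambda>_. 0) m \<in> I m" using F(2)[OF m] dpos by (auto simp: I_def)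
      moreover have "(x m j)\<^sup>2 = (if j = restrict (\<lambda>_. 0) m then 1 else 0)" for j
        by (simp add: x_def)
      ultimately show ?thesis using finI[OF m] by simp
    qed
    thus ?thesis using True by (auto simp: L_def)
  next
    case False
    define x where "x C s = u 1 C s" for C and s :: "nat \<Rightarrow> nat"
    have one: "1 \<in> {1..r}" using False by auto
    have "(\<Sum>j\<in>I m. (x m j)\<^sup>2) = 1" if m: "m \<in> \<rho>" for m
      using ortho[OF m one one] by (simp add: x_def power2_eq_square)
    moreover have "(\<Sum>n=1..r. lam n * (\<Prod>C\<in>\<rho>. c n C x)) = L"
    proof -
      have "(\<Sum>n=1..r. lam n * (\<Prod>C\<in>\<rho>. c n C x)) = (\<Sum>n=1..r. lam n * (if n = 1 then 1 else 0))"
      proof (intro sum.cong refl arg_cong[where f="\<lambda>z. lam _ * z"])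
        fix n assume n: "n \<in> {1..r}"
        have cc: "c n C x = (if n = 1 then 1 else 0)" if "C \<in> \<rho>" for C
          using ortho[OF that n one] by (simp add: c_def x_def)
        show "(\<Prod>C\<in>\<rho>. c n C x) = (if n = 1 then 1 else 0)"
        proof (cases "n = 1")
          case True thus ?thesis using cc by simp
        next
          case False thus ?thesis using cc C12(1) F(1) by (simp add: prod_zero_iff card_gt_0_iff; blast)
        qed
      qed
      also have "\<dots> = lam 1" using one by (simp add: if_distrib cong: if_cong)
      finally show ?thesis using False by (simp add: L_def)
    qed
    ultimately show ?thesis by blast
  qed
  have "unfold_norm d \<rho> A = Sup {(\<Sum>n=1..r. lam n * (\<Prod>C\<in>\<rho>. c n C x)) | x.
        \<forall>m\<in>\<rho>. (\<Sum>j\<in>I m. (x m j)\<^sup>2) = 1}"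
    unfolding unfold_norm_def spectral_norm_def I_def[symmetric] val ..
  also have "\<dots> = L"
    by (rule cSup_eq_maximum) (use attain upper in auto)
  finally show ?thesis by (simp add: L_def)
qed

lemma empty_case:
  assumes P: "partition_on {..<k} \<rho>" and i: "i < k" "d i = 0"
  shows "unfold_norm d \<rho> A = Sup {}"
proof -
  obtain C where C: "C \<in> \<rho>" "i \<in> C" using part_facts(4)[OF P i(1)] by blast
  have E: "PiE C (\<lambda>i. {..<d i}) = {}" using C i by (auto simp: PiE_eq_empty_iff)
  show ?thesis unfolding unfold_norm_def spectral_norm_def
    by (rule arg_cong[where f=Sup]) (use C E in fastforce)
qed

lemma refine_union:
  assumes Pp: "partition_on {..<k} \<pi>" and Pt: "partition_on {..<k} \<tau>" and R: "refines \<pi> \<tau>"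
    and C: "C \<in> \<tau>"
  shows "C = \<Union>{B\<in>\<pi>. B \<subseteq> C}"
proof
  show "\<Union>{B\<in>\<pi>. B \<subseteq> C} \<subseteq> C" by blast
  show "C \<subseteq> \<Union>{B\<in>\<pi>. B \<subseteq> C}"
  proof
    fix i assume i: "i \<in> C"
    hence "i < k" using part_facts(2)[OF Pt C] by auto
    then obtain B where B: "B \<in> \<pi>" "i \<in> B" using part_facts(4)[OF Pp] by blast
    then obtain C' where C': "C' \<in> \<tau>" "B \<subseteq> C'" using R unfolding refines_def by blast
    have "C' = C" using part_facts(3)[OF Pt C' (1)] part_facts(3)[OF Pt C i] B C' by auto
    thus "i \<in> \<Union>{B\<in>\<pi>. B \<subseteq> C}" using B C' by blast
  qed
qed

theorem theorem5p5:
  fixes k :: nat and d :: "nat \<Rightarrow> nat" and A :: "(nat \<Rightarrow> nat) \<Rightarrow> real"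
    and \<pi> \<tau> :: "nat set set"
  assumes "\<pi> \<in> partitions k"
    and "pi_OD k d \<pi> A"
    and "\<tau> \<in> partitions k" and "refines \<pi> \<tau>" and "\<tau> \<noteq> {{..<k}}"
  shows "unfold_norm d \<tau> A = unfold_norm d \<pi> A"
proof -
  have Pp: "partition_on {..<k} \<pi>" and Pt: "partition_on {..<k} \<tau>"
    using assms(1,3) by (auto simp: partitions_def)
  note R = assms(4)
  obtain r :: nat and lam and a :: "nat \<Rightarrow> nat \<Rightarrow> nat \<Rightarrow> real" where mono: "\<forall>n m. 1 \<le> n \<longrightarrow> n \<le> m \<longrightarrow> m \<le> r \<longrightarrow> lam m \<le> (lam n::real)"
    and nn: "\<forall>n. 1 \<le> n \<longrightarrow> n \<le> r \<longrightarrow> 0 \<le> lam n"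
    and rep: "\<forall>idx\<in>index_set k d. A idx = (\<Sum>n=1..r. lam n * (\<Prod>i<k. a n i (idx i)))"
    and orth: "\<forall>B\<in>\<pi>. \<forall>n\<in>{1..r}. \<forall>m\<in>{1..r}. block_inner d B (a n) (a m) = (if n = m then 1 else 0)"
    using assms(2) unfolding pi_OD_def by blast
  show ?thesis
  proof (cases "k = 0")
    case True
    hence "\<pi> = {}" "\<tau> = {}" using Pp Pt by (auto simp: partition_on_empty)
    thus ?thesis by simp
  next
    case k: False
    show ?thesis
    proof (cases "\<exists>i<k. d i = 0")
      case True
      then obtain i where "i < k" "d i = 0" by blast
      thus ?thesis using empty_case[OF Pp] empty_case[OF Pt] by metis
    next
      case False
      hence dpos: "\<forall>i<k. 0 < d i" by auto
      obtain C1 where C1: "C1 \<in> \<tau>" "0 \<in> C1" using part_facts(4)[OF Pt] k by blast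
      have "C1 \<noteq> {..<k}"
      proof
        assume eq: "C1 = {..<k}"
        have "\<tau> = {C1}"
        proof (intro set_eqI iffI)
          fix C assume C: "C \<in> \<tau>"
          then obtain i where "i \<in> C" using part_facts(2)[OF Pt] by blast
          moreover have "i \<in> C1" using \<open>i \<in> C\<close> part_facts(2)[OF Pt C] eq by auto
          ultimately show "C \<in> {C1}" using part_facts(3)[OF Pt C] part_facts(3)[OF Pt C1(1)] by force
        qed (use C1 in auto)
        thus False using assms(5) eq by simp
      qed
      then obtain j where j: "j < k" "j \<notin> C1" using part_facts(2)[OF Pt C1(1)] by blast
      obtain C2 where C2: "C2 \<in> \<tau>" "j \<in> C2" using part_facts(4)[OF Pt j(1)] by blast
      have C12: "C1 \<noteq> C2" using j C2 by auto
      obtain B1 where B1: "B1 \<in> \<pi>" "0 \<in> B1" using part_facts(4)[OF Pp] k by blast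
      obtain B2 where B2: "B2 \<in> \<pi>" "j \<in> B2" using part_facts(4)[OF Pp j(1)] by blast
      have B12: "B1 \<noteq> B2"
      proof
        assume eq: "B1 = B2"
        obtain C' where C': "C' \<in> \<tau>" "B1 \<subseteq> C'" using R B1 unfolding refines_def by blast
        have "C' = C1" using part_facts(3)[OF Pt C'(1), of 0] part_facts(3)[OF Pt C1] C' B1 by auto
        moreover have "C' = C2" using part_facts(3)[OF Pt C'(1), of j] part_facts(3)[OF Pt C2] C' B2 eq by auto
        ultimately show False using C12 by simp
      qed
      have ortht: "\<forall>C\<in>\<tau>. \<forall>n\<in>{1..r}. \<forall>m\<in>{1..r}. block_inner d C (a n) (a m) = (if n = m then 1 else 0)"
      proof (intro ballI)
        fix C n m assume C: "C \<in> \<tau>" and n: "n \<in> {1..r}" and m: "m \<in> {1..r}"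
        define ip where "ip i = (\<Sum>v\<in>{..<d i}. a n i v * a m i v)" for i
        define PC where "PC = {B\<in>\<pi>. B \<subseteq> C}"
        have finB: "finite B" if "B \<in> \<pi>" for B using part_facts(2)[OF Pp that] by blast
        have finC: "finite C" using part_facts(2)[OF Pt C] by blast
        have Bv: "(\<Prod>i\<in>B. ip i) = (if n = m then 1 else 0)" if "B \<in> \<pi>" for B
          using orth that n m block_inner_prod[OF finB[OF that], of d "a n" "a m"] by (simp add: ip_def)
        have "block_inner d C (a n) (a m) = (\<Prod>i\<in>C. ip i)"
          using block_inner_prod[OF finC] by (simp add: ip_def)
        also have "\<dots> = (\<Prod>i\<in>\<Union>PC. ip i)" using refine_union[OF Pp Pt R C] by (simp add: PC_def)
        also have "\<dots> = (\<Prod>B\<in>PC. \<Prod>i\<in>B. ip i)"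
          by (rule prod.Union_disjoint[where g=ip, simplified])
             (use finB disjointD[OF partition_onD2[OF Pp]] in \<open>auto simp: PC_def\<close>)
        also have "\<dots> = (\<Prod>B\<in>PC. (if n = m then 1 else 0))"
          by (intro prod.cong refl) (auto simp: PC_def Bv)
        also have "\<dots> = (if n = m then 1 else 0)"
        proof -
          have "PC \<noteq> {}"
          proof -
            obtain i where "i \<in> C" using part_facts(2)[OF Pt C] by blast
            hence "i \<in> \<Union>PC" using refine_union[OF Pp Pt R C] by (simp add: PC_def)
            thus ?thesis by blast
          qed
          moreover have "finite PC" using part_facts(1)[OF Pp] by (simp add: PC_def)
          ultimately show ?thesis by (auto simp: card_gt_0_iff)
        qed
        finally show "block_inner d C (a n) (a m) = (if n = m then 1 else 0)" .
      qed
      have "unfold_norm d \<tau> A = (if r = 0 then 0 else lam 1)"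
        by (rule main[OF Pt C1(1) C2(1) C12 dpos mono nn rep ortht])
      moreover have "unfold_norm d \<pi> A = (if r = 0 then 0 else lam 1)"
        by (rule main[OF Pp B1(1) B2(1) B12 dpos mono nn rep orth])
      ultimately show ?thesis by simp
    qed
  qed
qed

end
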